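(* For all positive integers $r,n$, the length function $\ell$ and the sorting index $\mathsf{sor}$ have the same distribution over $\mathsf{G}_{r,n}$; namely $$\sum_{\pi\in\mathsf{G}_{r,n}}q^{\ell(\pi)}=\sum_{\pi\in\mathsf{G}_{r,n}}q^{\mathsf{sor}(\pi)}=[n]_q!\cdot\prod_{i=1}^n\bigl(1+q^i[r-1]_q\bigr),$$ where $[i]_q=1+q+\cdots+q^{i-1}$ and $[n]_q!=[1]_q[2]_q\cdots[n]_q$.
   Context: $\mathsf{G}_{r,n}=C_r\wr\mathfrak{S}_n$ is the set of pairs $\pi=(\sigma,\mathbf z)$ with $\sigma\in\mathfrak S_n$, $\mathbf z\in(\mathbb Z/r\mathbb Z)^n$, written as the word $\pi=\sigma_1^{[z_1]}\cdots\sigma_n^{[z_n]}$ ($\sigma_i$ = base value, $z_i\in\{0,\dots,r-1\}$ = color of the $i$-th letter; colors are read mod $r$). Product: $(\sigma,\mathbf z)(\rho,\mathbf w)=(\sigma\rho,\mathbf w+\rho(\mathbf z))$ with $\rho(\mathbf z)=(z_{\rho(1)},\dots,z_{\rho(n)})$. Length: let $s_0=1^{[1]}2\cdots n$ and, for $1\le i\le n-1$, let $s_i$ be the element with base permutation the adjacent transposition $(i\ i+1)$ and all colors $0$ (so right multiplication by $s_0$ adds $1$ to the color of the first letter and right multiplication by $s_i$ swaps the letters in positions $i,i+1$). $\ell(\pi)$ is the minimal number of factors needed to write $\pi$ as a product of elements of $\{s_0,\dots,s_{n-1}\}$. Sorting index: for $1\le i<j$ and $t\in\mathbb Z/r$,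 right multiplication of a word $\tau_1^{[y_1]}\cdots\tau_j^{[y_j]}$ by $(i^{[t]}\,j)$ replaces the letter in position $j$ by $\tau_i^{[y_i+t]}$ and the letter in position $i$ by $\tau_j^{[y_j-t]}$. Given $\pi$, set $\pi^{(n)}=\pi$; for $j=n,n-1,\dots,1$ the word $\pi^{(j)}$ has length $j$ and base values $\{1,\dots,j\}$; let $c_j$ be the position in $\pi^{(j)}$ of the letter with base value $j$, $z$ its color, and $e_j\in\{0,\dots,r-1\}$ with $e_j\equiv -z \pmod r$; if $c_j<j$ let $\pi^{(j-1)}$ be the first $j-1$ letters of $\pi^{(j)}\cdot(c_j^{[e_j]}\,j)$ (whose last letter is $j^{[0]}$), and if $c_j=j$ let $\pi^{(j-1)}$ be the first $j-1$ letters of $\pi^{(j)}$. Then $$\mathsf{sor}(\pi)=\sum_{j=1}^n\Bigl(j-c_j+\chi(e_j>0)\bigl(2(c_j-1)+e_j\bigr)\Bigr),$$ where $\chi(A)=1$ if $A$ holds and $0$ otherwise. (This is the total distance travelled in the paper's sorting process.) *)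

theory Defs
  imports Main
begin

text \<open>Elements of the wreath product C_r wr S_n are colored words:
  a list of pairs (value, color), values in {1..n} each exactly once,
  colors in {0..r-1}.\<close>

definition colored_perms :: "nat \<Rightarrow> nat \<Rightarrow> (nat \<times> nat) list set" where
  "colored_perms r n = {w. length w = n \<and> distinct (map fst w) \<and> set (map fst w) = {1..n}
      \<and> (\<forall>x\<in>set w. snd x < r)}"

text \<open>Product (sigma,z)(rho,w) = (sigma rho, w + rho(z)); in word form the i-th letter of
  p*q is the letter of p in position rho(i) with color increased by the color w_i.\<close>

definition cmult :: "nat \<Rightarrow> (nat \<times> nat) list \<Rightarrow> (nat \<times> nat) list \<Rightarrow> (nat \<times> nat) list" where
  "cmult r p q = map (\<lambda>i. (fst (p ! (fst (q ! i) - 1)),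
                           (snd (p ! (fst (q ! i) - 1)) + snd (q ! i)) mod r)) [0..<length q]"

definition cid :: "nat \<Rightarrow> (nat \<times> nat) list" where
  "cid n = map (\<lambda>i. (i, 0)) [1..<Suc n]"

definition gen0 :: "nat \<Rightarrow> nat \<Rightarrow> (nat \<times> nat) list" where
  "gen0 r n = (cid n)[0 := (1, 1 mod r)]"

definition geni :: "nat \<Rightarrow> nat \<Rightarrow> (nat \<times> nat) list" where
  "geni n i = (cid n)[i - 1 := (i + 1, 0), i := (i, 0)]"

definition generators :: "nat \<Rightarrow> nat \<Rightarrow> (nat \<times> nat) list set" where
  "generators r n = insert (gen0 r n) {geni n i | i. 1 \<le> i \<and> i \<le> n - 1}"

definition clength :: "nat \<Rightarrow> nat \<Rightarrow> (nat \<times> nat) list \<Rightarrow> nat" where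
  "clength r n w = (LEAST k. \<exists>gs. length gs = k \<and> set gs \<subseteq> generators r n
                                \<and> foldl (cmult r) (cid n) gs = w)"

definition sor_pos :: "(nat \<times> nat) list \<Rightarrow> nat" where
  "sor_pos w = Suc (LEAST i. i < length w \<and> fst (w ! i) = length w)"

definition sor_e :: "nat \<Rightarrow> (nat \<times> nat) list \<Rightarrow> nat" where
  "sor_e r w = (r - snd (w ! (sor_pos w - 1)) mod r) mod r"

definition sor_cost :: "nat \<Rightarrow> (nat \<times> nat) list \<Rightarrow> nat" where
  "sor_cost r w = (let j = length w; c = sor_pos w; e = sor_e r w in
      j - c + (if e > 0 then 2 * (c - 1) + e else 0))"

text \<open>One step: if c < j, multiply on the right by (c^[e] j) (position j receives
  letter tau_c with color y_c + e, position c receives tau_j with color y_j - e), then drop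
  the last letter; if c = j just drop the last letter.\<close>

definition sor_step :: "nat \<Rightarrow> (nat \<times> nat) list \<Rightarrow> (nat \<times> nat) list" where
  "sor_step r w = (let j = length w; c = sor_pos w; e = sor_e r w in
      if c < j then
        take (j - 1) (w[c - 1 := (fst (w ! (j - 1)), (snd (w ! (j - 1)) + r - e) mod r),
                        j - 1 := (fst (w ! (c - 1)), (snd (w ! (c - 1)) + e) mod r)])
      else take (j - 1) w)"

definition sor :: "nat \<Rightarrow> (nat \<times> nat) list \<Rightarrow> nat" where
  "sor r w = (\<Sum>k<length w. sor_cost r ((sor_step r ^^ k) w))"

definition qint :: "'a::comm_semiring_1 \<Rightarrow> nat \<Rightarrow> 'a" where
  "qint q i = (\<Sum>k<i. q ^ k)"

definition qfact :: "'a::comm_semiring_1 \<Rightarrow> nat \<Rightarrow> 'a" where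
  "qfact q n = (\<Prod>i=1..n. qint q i)"

end

theory Submission
  imports Defs "HOL-Library.Multiset"
begin



definition P :: "nat \<times> nat \<Rightarrow> nat \<times> nat \<Rightarrow> nat" where
  "P a b = (if fst b < fst a \<and> snd a = 0 then 1 else 0) + (if fst a < fst b \<and> snd b \<noteq> 0 then 1 else 0)"

definition S :: "nat \<times> nat \<Rightarrow> nat" where
  "S a = (if snd a = 0 then 0 else fst a - 1 + snd a)"

fun Lp :: "(nat \<times> nat) list \<Rightarrow> nat" where
  "Lp [] = 0"
| "Lp (x # xs) = sum_list (map (P x) xs) + S x + Lp xs"

lemma Lp_swap: "Lp (as @ a # b # bs) + P b a = Lp (as @ b # a # bs) + P a b"
  by (induction as) (simp_all add: P_def)

lemma P_sym: "fst a \<noteq> fst b \<Longrightarrow> P a b + P b a = 1"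
  unfolding P_def by auto

lemma Lp_del: "Lp (as @ m # bs) = Lp (as @ bs) + sum_list (map (\<lambda>a. P a m) as) + sum_list (map (P m) bs) + S m"
  by (induction as) simp_all

lemma sum_list_ind: "sum_list (map (\<lambda>y. if Q y then 1 else 0) xs) = length (filter Q xs)"
  by (induction xs) auto

lemma Lp_zero: "\<forall>x\<in>set xs. snd x = 0 \<Longrightarrow> sorted_wrt (\<lambda>x y. fst x < fst y) xs \<Longrightarrow> Lp xs = 0"
proof (induction xs)
  case (Cons x xs)
  have "sum_list (map (P x) xs) = 0"
    using Cons.prems by (auto simp: P_def sum_list_eq_0_iff)
  then show ?case using Cons by (simp add: S_def)
qed simp

lemma cid_Lp: "Lp (cid n) = 0"
  unfolding cid_def by (rule Lp_zero) (auto simp: sorted_wrt_map sorted_wrt_upt simp del: upt_Suc)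

lemma cid_cp: "0 < r \<Longrightarrow> cid n \<in> colored_perms r n"
  unfolding cid_def colored_perms_def by (auto simp: image_image comp_def distinct_map inj_on_def atLeastLessThanSuc_atLeastAtMost simp del: upt_Suc)

lemma count_less:
  assumes "distinct (map fst ((v,z)#xs))" "set (map fst ((v,z)#xs)) = {1..n}"
  shows "length (filter (\<lambda>y. fst y < v) xs) = v - 1"
proof -
  have "length (filter (\<lambda>y. fst y < v) xs) = length (filter (\<lambda>x. x < v) (map fst xs))"
    by (simp add: filter_map comp_def)
  also have "\<dots> = card (set (filter (\<lambda>x. x < v) (map fst xs)))"
    using assms(1) distinct_card[of "filter (\<lambda>x. x < v) (map fst xs)"] by simp
  also have "set (filter (\<lambda>x. x < v) (map fst xs)) = {1..<v}"
  proof -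
    have vn: "v \<le> n" "v \<notin> fst ` set xs" using assms by auto
    have "insert v (fst ` set xs) = {1..n}" using assms by simp
    then show ?thesis using vn by (auto simp: set_eq_iff)
  qed
  finally show ?thesis by simp
qed

lemma Lp_head:
  assumes "distinct (map fst ((v,z)#xs))" "set (map fst ((v,z)#xs)) = {1..n}"
  shows "Lp ((v,z)#xs) = v - 1 + z + sum_list (map (\<lambda>y. if v < fst y \<and> snd y \<noteq> 0 then 1 else 0) xs) + Lp xs"
proof -
  have v: "1 \<le> v" using assms(2) by auto
  have "sum_list (map (P (v,z)) xs) = sum_list (map (\<lambda>y. if fst y < v \<and> z = 0 then 1 else 0) xs)
        + sum_list (map (\<lambda>y. if v < fst y \<and> snd y \<noteq> 0 then 1 else 0) xs)"
    by (induction xs) (auto simp: P_def)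
  also have "sum_list (map (\<lambda>y. if fst y < v \<and> z = 0 then 1 else 0) xs) = (if z = 0 then v - 1 else 0)"
    using count_less[OF assms] by (simp add: sum_list_ind)
  finally show ?thesis using v by (cases "z = 0") (simp_all add: S_def)
qed




lemma cp_D: "w \<in> colored_perms r n \<Longrightarrow> length w = n \<and> distinct (map fst w) \<and> set (map fst w) = {1..n} \<and> (\<forall>x\<in>set w. snd x < r)"
  by (simp add: colored_perms_def)

lemma length_cid[simp]: "length (cid n) = n"
  by (simp add: cid_def)

lemma nth_cid[simp]: "i < n \<Longrightarrow> cid n ! i = (Suc i, 0)"
  by (simp add: cid_def del: upt_Suc)

lemma length_cmult[simp]: "length (cmult r p q) = length q"
  by (simp add: cmult_def)

lemma nth_cmult: "i < length q \<Longrightarrow> cmult r p q ! i = (fst (p ! (fst (q ! i) - 1)), (snd (p ! (fst (q ! i) - 1)) + snd (q ! i)) mod r)"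
  by (simp add: cmult_def)

lemma cmult_gen0:
  assumes "w \<in> colored_perms r n" "0 < n"
  shows "cmult r w (gen0 r n) = w[0 := (fst (w!0), Suc (snd (w!0)) mod r)]"
proof (rule nth_equalityI)
  show "length (cmult r w (gen0 r n)) = length (w[0 := (fst (w!0), Suc (snd (w!0)) mod r)])"
    using cp_D[OF assms(1)] by (simp add: gen0_def)
next
  fix t assume "t < length (cmult r w (gen0 r n))"
  then have t: "t < n" by (simp add: gen0_def)
  have c: "snd (w!t) < r" using cp_D[OF assms(1)] t by auto
  show "cmult r w (gen0 r n) ! t = w[0 := (fst (w!0), Suc (snd (w!0)) mod r)] ! t"
    using t c assms(2) cp_D[OF assms(1)]
    by (cases t) (auto simp: gen0_def nth_cmult nth_list_update mod_add_right_eq simp del: upt_Suc)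
qed

lemma cmult_geni:
  assumes "w \<in> colored_perms r n" "Suc i < n"
  shows "cmult r w (geni n (Suc i)) = w[i := w!Suc i, Suc i := w!i]"
proof (rule nth_equalityI)
  show "length (cmult r w (geni n (Suc i))) = length (w[i := w!Suc i, Suc i := w!i])"
    using cp_D[OF assms(1)] by (simp add: geni_def)
next
  fix t assume "t < length (cmult r w (geni n (Suc i)))"
  then have t: "t < n" by (simp add: geni_def)
  have c: "\<And>k. k < n \<Longrightarrow> snd (w!k) < r" using cp_D[OF assms(1)] by auto
  show "cmult r w (geni n (Suc i)) ! t = w[i := w!Suc i, Suc i := w!i] ! t"
    using t c assms(2) cp_D[OF assms(1)]
    by (auto simp: geni_def nth_cmult nth_list_update simp del: upt_Suc)
qed

lemma swap_split:
  assumes "Suc i < length w"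
  shows "w = take i w @ w!i # w!Suc i # drop (Suc (Suc i)) w"
    and "w[i := w!Suc i, Suc i := w!i] = take i w @ w!Suc i # w!i # drop (Suc (Suc i)) w"
proof -
  have a: "w = take i w @ w!i # drop (Suc i) w" using assms by (intro id_take_nth_drop) simp
  have b: "drop (Suc i) w = w!Suc i # drop (Suc (Suc i)) w" using assms by (simp add: Cons_nth_drop_Suc)
  show "w = take i w @ w!i # w!Suc i # drop (Suc (Suc i)) w" using a b by simp
  show "w[i := w!Suc i, Suc i := w!i] = take i w @ w!Suc i # w!i # drop (Suc (Suc i)) w"
  proof (intro nth_equalityI)
    fix k assume "k < length (w[i := w!Suc i, Suc i := w!i])"
    moreover have "\<not> k \<le> Suc i \<Longrightarrow> Suc (Suc (k - 2)) = k" by arith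
    ultimately show "w[i := w!Suc i, Suc i := w!i] ! k = (take i w @ w!Suc i # w!i # drop (Suc (Suc i)) w) ! k"
      using assms by (auto simp: nth_append nth_list_update min_def nth_Cons')
  qed (use assms in simp)
qed

lemma cp_swap:
  assumes "w \<in> colored_perms r n" "Suc i < n"
  shows "w[i := w!Suc i, Suc i := w!i] \<in> colored_perms r n"
proof -
  have l: "length w = n" using cp_D[OF assms(1)] by simp
  have m: "map fst (w[i := w!Suc i, Suc i := w!i]) = (map fst w)[i := map fst w!Suc i, Suc i := map fst w!i]"
    using assms l by (simp add: map_update)
  have s: "set (w[i := w!Suc i, Suc i := w!i]) = set w" using assms l by (simp add: set_swap)
  have d: "distinct ((map fst w)[i := map fst w!Suc i, Suc i := map fst w!i])"
    using assms l cp_D[OF assms(1)] by (subst distinct_swap) simp_all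
  have s2: "set ((map fst w)[i := map fst w!Suc i, Suc i := map fst w!i]) = set (map fst w)"
    using assms l by (subst set_swap) simp_all
  show ?thesis unfolding colored_perms_def
    using cp_D[OF assms(1)] l m s d s2 by (simp only: mem_Collect_eq length_list_update) simp
qed

lemma Lp_swap_cp:
  assumes "w \<in> colored_perms r n" "Suc i < n"
  shows "Lp w + P (w!Suc i) (w!i) = Lp (w[i := w!Suc i, Suc i := w!i]) + P (w!i) (w!Suc i)"
proof -
  have l: "Suc i < length w" using assms cp_D[OF assms(1)] by simp
  define as a b bs where "as = take i w" "a = w!i" "b = w!Suc i" "bs = drop (Suc (Suc i)) w"
  have w: "w = as @ a # b # bs" using swap_split(1)[OF l] unfolding as_a_b_bs_def .
  have sw: "w[i := w!Suc i, Suc i := w!i] = as @ b # a # bs" using swap_split(2)[OF l] unfolding as_a_b_bs_def .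
  have 1: "Lp w + P b a = Lp (as @ b # a # bs) + P a b" by (subst w) (rule Lp_swap)
  show ?thesis using 1 sw unfolding as_a_b_bs_def(2,3)[symmetric] by simp
qed

lemma cp_gen0:
  assumes "w \<in> colored_perms r n" "0 < n" "z' < r"
  shows "w[0 := (fst (w!0), z')] \<in> colored_perms r n"
proof -
  have l: "length w = n" using cp_D[OF assms(1)] by simp
  have m: "map fst (w[0 := (fst (w!0), z')]) = map fst w"
    using assms l by (simp add: map_update list_update_same_conv)
  have "\<forall>x\<in>set (w[0 := (fst (w!0), z')]). snd x < r"
    using cp_D[OF assms(1)] assms(3) by (auto dest: set_update_subset_insert[THEN subsetD])
  then show ?thesis using cp_D[OF assms(1)] l m unfolding colored_perms_def
    by (simp del: set_map)
qed

lemma Lp_color_head: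
  assumes "w \<in> colored_perms r n" "0 < n" "z' < r"
  shows "Lp (w[0 := (fst (w!0), z')]) + snd (w!0) = Lp w + z'"
proof -
  obtain v z xs where w: "w = (v,z) # xs" using assms cp_D[OF assms(1)]
    by (cases w) auto
  have d: "distinct (map fst ((v,z)#xs))" "set (map fst ((v,z)#xs)) = {1..n}"
    using cp_D[OF assms(1)] w by auto
  have d': "distinct (map fst ((v,z')#xs))" "set (map fst ((v,z')#xs)) = {1..n}"
    using d by auto
  show ?thesis using Lp_head[OF d] Lp_head[OF d'] w by simp
qed


lemma fst_ne:
  assumes "distinct (map fst w)" "i < length w" "j < length w" "i \<noteq> j"
  shows "fst (w!i) \<noteq> fst (w!j)"
  using assms nth_eq_iff_index_eq[of "map fst w" i j] by simp

lemma gen_step: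
  assumes "w \<in> colored_perms r n" "g \<in> generators r n" "0 < n" "0 < r"
  shows "cmult r w g \<in> colored_perms r n \<and> Lp (cmult r w g) \<le> Lp w + 1"
proof (cases "g = gen0 r n")
  case True
  have z: "Suc (snd (w!0)) mod r < r" using assms(4) by simp
  have "Lp (w[0 := (fst (w!0), Suc (snd (w!0)) mod r)]) + snd (w!0) = Lp w + Suc (snd (w!0)) mod r"
    by (rule Lp_color_head[OF assms(1,3) z])
  moreover have "Suc (snd (w!0)) mod r \<le> Suc (snd (w!0))" by (rule mod_less_eq_dividend)
  ultimately have "Lp (w[0 := (fst (w!0), Suc (snd (w!0)) mod r)]) \<le> Lp w + 1" by linarith
  then have "Lp (cmult r w g) \<le> Lp w + 1" using True cmult_gen0[OF assms(1,3)] by simp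
  then show ?thesis using True cmult_gen0[OF assms(1,3)] cp_gen0[OF assms(1,3) z] by simp
next
  case False
  then obtain k where k: "g = geni n k" "1 \<le> k" "k \<le> n - 1" using assms(2) by (auto simp: generators_def)
  then obtain i where i: "k = Suc i" "Suc i < n" using assms(3) by (cases k) auto
  have l: "length w = n" using cp_D[OF assms(1)] by simp
  have "fst (w!i) \<noteq> fst (w!Suc i)"
    using cp_D[OF assms(1)] i l by (intro fst_ne) auto
  then have "P (w!i) (w!Suc i) + P (w!Suc i) (w!i) = 1" by (rule P_sym)
  then show ?thesis using Lp_swap_cp[OF assms(1) i(2)] cmult_geni[OF assms(1) i(2)] cp_swap[OF assms(1) i(2)] k i
    by simp
qed

lemma no_desc_cid:
  assumes "w \<in> colored_perms r n" "0 < n" "snd (w!0) = 0"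
    and nd: "\<And>i. Suc i < n \<Longrightarrow> P (w!i) (w!Suc i) = 0"
  shows "w = cid n"
proof -
  have l: "length w = n" and dw: "distinct (map fst w)" and sw: "set (map fst w) = {1..n}"
    using cp_D[OF assms(1)] by auto
  have ne: "\<And>i. Suc i < n \<Longrightarrow> fst (w!i) \<noteq> fst (w!Suc i)"
    using dw l by (intro fst_ne) auto
  have col: "k < n \<Longrightarrow> snd (w!k) = 0" for k
  proof (induction k)
    case 0 then show ?case using assms(3) by simp
  next
    case (Suc k)
    then have "snd (w!k) = 0" by simp
    moreover have "P (w!k) (w!Suc k) = 0" using nd Suc.prems by simp
    ultimately show ?case using ne[OF Suc.prems] unfolding P_def by (auto split: if_splits)
  qed
  have inc: "Suc k < n \<Longrightarrow> fst (w!k) < fst (w!Suc k)" for k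
    using col[of k] nd[of k] ne[of k] unfolding P_def by (auto split: if_splits)
  have "sorted (map fst w)" unfolding sorted_iff_nth_Suc using inc l by (simp add: less_imp_le)
  then have mf: "map fst w = [1..<Suc n]"
    using dw sw by (intro sorted_distinct_set_unique) (auto simp del: upt_Suc)
  show ?thesis
  proof (rule nth_equalityI)
    show "length w = length (cid n)" using l by simp
  next
    fix k assume k: "k < length w"
    have "fst (w!k) = Suc k" using arg_cong[OF mf, of "\<lambda>xs. xs!k"] k l by (simp del: upt_Suc)
    then show "w!k = cid n ! k" using col[of k] k l by (cases "w!k") simp
  qed
qed

lemma descent:
  assumes "w \<in> colored_perms r n" "0 < n" "0 < r" "w \<noteq> cid n"
  shows "\<exists>w' g. w' \<in> colored_perms r n \<and> g \<in> generators r n \<and> cmult r w' g = w \<and> Lp w' + 1 = Lp w"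
proof (cases "snd (w!0) = 0")
  case False
  define w' where "w' = w[0 := (fst (w!0), snd (w!0) - 1)]"
  have l: "length w = n" using cp_D[OF assms(1)] by simp
  have zr: "snd (w!0) < r" using cp_D[OF assms(1)] l assms(2) by auto
  have zr': "snd (w!0) - 1 < r" using zr by simp
  have cw: "w' \<in> colored_perms r n" unfolding w'_def by (rule cp_gen0[OF assms(1,2) zr'])
  have "Lp w' + snd (w!0) = Lp w + (snd (w!0) - 1)" unfolding w'_def by (rule Lp_color_head[OF assms(1,2) zr'])
  then have L: "Lp w' + 1 = Lp w" using False by simp
  have "cmult r w' (gen0 r n) = w'[0 := (fst (w'!0), Suc (snd (w'!0)) mod r)]"
    by (rule cmult_gen0[OF cw assms(2)])
  also have "\<dots> = w" using False zr l assms(2) by (simp add: w'_def)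
  finally show ?thesis using cw L by (intro exI[of _ w'] exI[of _ "gen0 r n"]) (simp add: generators_def)
next
  case True
  have "\<exists>i. Suc i < n \<and> P (w!i) (w!Suc i) \<noteq> 0"
    using no_desc_cid[OF assms(1,2) True] assms(4) by blast
  then obtain i where i: "Suc i < n" "P (w!i) (w!Suc i) \<noteq> 0" by blast
  have l: "length w = n" using cp_D[OF assms(1)] by simp
  define w' where "w' = w[i := w!Suc i, Suc i := w!i]"
  have "fst (w!i) \<noteq> fst (w!Suc i)"
    using cp_D[OF assms(1)] i l by (intro fst_ne) auto
  then have s1: "P (w!i) (w!Suc i) + P (w!Suc i) (w!i) = 1" by (rule P_sym)
  have cw: "w' \<in> colored_perms r n" unfolding w'_def by (rule cp_swap[OF assms(1) i(1)])
  have L: "Lp w' + 1 = Lp w" using Lp_swap_cp[OF assms(1) i(1)] s1 i(2) unfolding w'_def by simp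
  have "cmult r w' (geni n (Suc i)) = w'[i := w'!Suc i, Suc i := w'!i]" by (rule cmult_geni[OF cw i(1)])
  also have "\<dots> = w" using i l unfolding w'_def by (auto intro!: nth_equalityI simp: nth_list_update)
  finally show ?thesis using cw L i by (intro exI[of _ w'] exI[of _ "geni n (Suc i)"]) (auto simp: generators_def)
qed

lemma lower:
  assumes "set gs \<subseteq> generators r n" "0 < n" "0 < r"
  shows "foldl (cmult r) (cid n) gs \<in> colored_perms r n \<and> Lp (foldl (cmult r) (cid n) gs) \<le> length gs"
  using assms(1)
proof (induction gs rule: rev_induct)
  case Nil then show ?case using cid_cp[OF assms(3)] cid_Lp by simp
next
  case (snoc g gs)
  then have IH: "foldl (cmult r) (cid n) gs \<in> colored_perms r n" "Lp (foldl (cmult r) (cid n) gs) \<le> length gs"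
    and g: "g \<in> generators r n" by auto
  show ?case using gen_step[OF IH(1) g assms(2,3)] IH(2) by simp
qed

lemma upper:
  assumes "0 < n" "0 < r"
  shows "w \<in> colored_perms r n \<Longrightarrow> \<exists>gs. length gs = Lp w \<and> set gs \<subseteq> generators r n \<and> foldl (cmult r) (cid n) gs = w"
proof (induction "Lp w" arbitrary: w)
  case 0
  have "w = cid n"
  proof (rule ccontr)
    assume "w \<noteq> cid n"
    then show False using descent[OF 0(2) assms] 0(1) by auto
  qed
  then show ?case using 0 by (intro exI[of _ "[]"]) simp
next
  case (Suc k)
  have "w \<noteq> cid n" using Suc(2) cid_Lp[of n] by auto
  then obtain w' g where w': "w' \<in> colored_perms r n" "g \<in> generators r n" "cmult r w' g = w" "Lp w' + 1 = Lp w"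
    using descent[OF Suc(3) assms] by blast
  then obtain gs where gs: "length gs = Lp w'" "set gs \<subseteq> generators r n" "foldl (cmult r) (cid n) gs = w'"
    using Suc(1)[of w'] Suc(2) by auto
  show ?case using gs w' by (intro exI[of _ "gs @ [g]"]) simp
qed

lemma clength_Lp:
  assumes "w \<in> colored_perms r n" "0 < n" "0 < r"
  shows "clength r n w = Lp w"
  unfolding clength_def
proof (rule Least_equality)
  show "\<exists>gs. length gs = Lp w \<and> set gs \<subseteq> generators r n \<and> foldl (cmult r) (cid n) gs = w"
    by (rule upper[OF assms(2,3) assms(1)])
next
  fix k assume "\<exists>gs. length gs = k \<and> set gs \<subseteq> generators r n \<and> foldl (cmult r) (cid n) gs = w"
  then obtain gs where "length gs = k" "set gs \<subseteq> generators r n" "foldl (cmult r) (cid n) gs = w" by blast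
  then show "Lp w \<le> k" using lower[of gs r n] assms by auto
qed




lemma cp_mset: "w \<in> colored_perms r n \<longleftrightarrow>
   length w = n \<and> mset (map fst w) = mset [1..<Suc n] \<and> (\<forall>x\<in>set w. snd x < r)"
proof -
  have "distinct (map fst w) \<and> set (map fst w) = {1..n} \<longleftrightarrow> mset (map fst w) = mset [1..<Suc n]"
  proof
    assume a: "distinct (map fst w) \<and> set (map fst w) = {1..n}"
    then show "mset (map fst w) = mset [1..<Suc n]"
      by (subst set_eq_iff_mset_eq_distinct[symmetric]) (auto simp del: upt_Suc)
  next
    assume a: "mset (map fst w) = mset [1..<Suc n]"
    then have "distinct (map fst w)" using mset_eq_imp_distinct_iff[OF a] by (simp del: upt_Suc)
    moreover have "set (map fst w) = set [1..<Suc n]" using a by (metis set_mset_mset)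
    ultimately show "distinct (map fst w) \<and> set (map fst w) = {1..n}" by (auto simp del: upt_Suc)
  qed
  then show ?thesis unfolding colored_perms_def by blast
qed

lemma mset_upt_Suc: "mset [1..<Suc (Suc n)] = add_mset (Suc n) (mset [1..<Suc n])"
  by simp

lemma cp_join:
  assumes "as @ bs \<in> colored_perms r n" "z < r"
  shows "as @ (Suc n, z) # bs \<in> colored_perms r (Suc n)"
  using assms unfolding cp_mset mset_upt_Suc by (auto simp del: upt_Suc mset_upt)

lemma cp_split:
  assumes "as @ (Suc n, z) # bs \<in> colored_perms r (Suc n)"
  shows "as @ bs \<in> colored_perms r n"
  using assms unfolding cp_mset mset_upt_Suc by (auto simp del: upt_Suc mset_upt)

lemma finite_cp: "finite (colored_perms r n)"
proof (rule finite_subset)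
  show "colored_perms r n \<subseteq> {xs. set xs \<subseteq> {1..n} \<times> {..<r} \<and> length xs = n}"
    unfolding colored_perms_def by (force simp: mem_Times_iff)
  show "finite {xs. set xs \<subseteq> {1..n} \<times> {..<r} \<and> length xs = n}"
    by (rule finite_lists_length_eq) simp
qed

lemma cp0: "colored_perms r 0 = {[]}"
  by (auto simp: colored_perms_def)

definition cst :: "nat \<Rightarrow> nat \<Rightarrow> nat \<Rightarrow> nat" where
  "cst n c e = (if e = 0 then n - c else n + c + e)"

lemma gf_generic:
  fixes q :: "'a::comm_ring_1"
  assumes bij: "bij_betw (\<lambda>(u,c,e). ins u c e) (A \<times> ({..n} \<times> {..<r})) B"
    and fin: "finite A"
    and st: "\<And>u c e. u \<in> A \<Longrightarrow> c \<le> n \<Longrightarrow> e < r \<Longrightarrow> stat (ins u c e) = cst n c e + stat' u"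
  shows "(\<Sum>w\<in>B. q ^ stat w) = (\<Sum>u\<in>A. q ^ stat' u) * (\<Sum>c\<le>n. \<Sum>e<r. q ^ cst n c e)"
proof -
  have "(\<Sum>w\<in>B. q ^ stat w) = (\<Sum>t\<in>A \<times> ({..n} \<times> {..<r}). q ^ stat ((\<lambda>(u,c,e). ins u c e) t))"
    using sum.reindex_bij_betw[OF bij, of "\<lambda>w. q ^ stat w"] by simp
  also have "\<dots> = (\<Sum>u\<in>A. \<Sum>ce\<in>{..n} \<times> {..<r}. q ^ stat (ins u (fst ce) (snd ce)))"
    by (subst sum.cartesian_product) (simp add: case_prod_beta)
  also have "\<dots> = (\<Sum>u\<in>A. \<Sum>ce\<in>{..n} \<times> {..<r}. q ^ stat' u * q ^ cst n (fst ce) (snd ce))"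
    by (intro sum.cong refl) (auto simp: st power_add mult.commute)
  also have "\<dots> = (\<Sum>u\<in>A. q ^ stat' u * (\<Sum>c\<le>n. \<Sum>e<r. q ^ cst n c e))"
    by (intro sum.cong refl) (simp add: sum.cartesian_product case_prod_beta sum_distrib_left)
  also have "\<dots> = (\<Sum>u\<in>A. q ^ stat' u) * (\<Sum>c\<le>n. \<Sum>e<r. q ^ cst n c e)"
    by (simp add: sum_distrib_right)
  finally show ?thesis .
qed

lemma cst_sum:
  fixes q :: "'a::comm_ring_1"
  assumes "0 < r"
  shows "(\<Sum>c\<le>n. \<Sum>e<r. q ^ cst n c e) = qint q (Suc n) * (1 + q ^ Suc n * qint q (r - 1))"
proof -
  have r: "{..<r} = {..<Suc (r - 1)}" using assms by simp
  have "(\<Sum>c\<le>n. \<Sum>e<r. q ^ cst n c e) = (\<Sum>c\<le>n. q ^ (n - c) + (\<Sum>e<r - 1. q ^ (n + c + Suc e)))"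
    unfolding r by (intro sum.cong refl) (subst sum.lessThan_Suc_shift, simp add: cst_def)
  also have "\<dots> = (\<Sum>c\<le>n. q ^ (n - c)) + (\<Sum>c\<le>n. \<Sum>e<r - 1. q ^ (n + c + Suc e))"
    by (simp add: sum.distrib)
  also have "(\<Sum>c\<le>n. q ^ (n - c)) = (\<Sum>c\<le>n. q ^ c)"
    by (rule sum.reindex_bij_witness[of _ "\<lambda>c. n - c" "\<lambda>c. n - c"]) auto
  also have "(\<Sum>c\<le>n. \<Sum>e<r - 1. q ^ (n + c + Suc e)) = (\<Sum>c\<le>n. q ^ c) * (q ^ Suc n * qint q (r - 1))"
    by (simp add: qint_def sum_distrib_left sum_distrib_right power_add mult_ac) (subst sum.swap, simp add: mult_ac)
  finally show ?thesis by (simp add: qint_def lessThan_Suc_atMost algebra_simps)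
qed




definition insL :: "(nat \<times> nat) list \<Rightarrow> nat \<Rightarrow> nat \<Rightarrow> (nat \<times> nat) list" where
  "insL u c e = take c u @ (Suc (length u), e) # drop c u"

definition posL :: "(nat \<times> nat) list \<Rightarrow> nat" where
  "posL w = length (takeWhile (\<lambda>x. fst x \<noteq> length w) w)"

definition decL :: "(nat \<times> nat) list \<Rightarrow> (nat \<times> nat) list \<times> nat \<times> nat" where
  "decL w = (take (posL w) w @ drop (Suc (posL w)) w, posL w, snd (w ! posL w))"

lemma takeWhile_less: "\<exists>x\<in>set xs. \<not> Q x \<Longrightarrow> length (takeWhile Q xs) < length xs"
  by (induction xs) auto

lemma sum_list_const: "(\<forall>a\<in>set as. f a = k) \<Longrightarrow> sum_list (map f as) = length as * (k::nat)"
  by (induction as) auto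

lemma insL_cp:
  assumes "u \<in> colored_perms r n" "c \<le> n" "e < r"
  shows "insL u c e \<in> colored_perms r (Suc n)"
proof -
  have l: "length u = n" using cp_D[OF assms(1)] by simp
  have "take c u @ drop c u \<in> colored_perms r n" using assms(1) by simp
  then show ?thesis unfolding insL_def l by (rule cp_join[OF _ assms(3)])
qed

lemma decL_insL:
  assumes "u \<in> colored_perms r n" "c \<le> n"
  shows "decL (insL u c e) = (u, c, e)"
proof -
  have l: "length u = n" using cp_D[OF assms(1)] by simp
  have f: "\<forall>x\<in>set (take c u). fst x \<noteq> Suc n"
  proof
    fix x assume "x \<in> set (take c u)"
    then have "x \<in> set u" by (rule in_set_takeD)
    then have "fst x \<in> {1..n}" using cp_D[OF assms(1)] by auto
    then show "fst x \<noteq> Suc n" by simp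
  qed
  have lw: "length (insL u c e) = Suc n" using l assms(2) by (simp add: insL_def)
  have p: "posL (insL u c e) = c"
    unfolding posL_def lw unfolding insL_def l using f l assms(2) by (simp add: takeWhile_append2)
  show ?thesis unfolding decL_def p using l assms(2) by (simp add: insL_def nth_append)
qed

lemma decL_props:
  assumes "w \<in> colored_perms r (Suc n)"
  shows "posL w \<le> n" "fst (w ! posL w) = Suc n"
    "w = take (posL w) w @ (Suc n, snd (w ! posL w)) # drop (Suc (posL w)) w"
proof -
  have l: "length w = Suc n" using cp_D[OF assms(1)] by simp
  have "Suc n \<in> set (map fst w)" using cp_D[OF assms(1)] by simp
  then obtain x where "x \<in> set w" "fst x = Suc n" by auto
  then have "\<exists>x\<in>set w. \<not> (fst x \<noteq> length w)" using l by auto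
  then have lt: "posL w < length w" unfolding posL_def by (rule takeWhile_less)
  then show "posL w \<le> n" using l by simp
  show f: "fst (w ! posL w) = Suc n" using nth_length_takeWhile[OF lt[unfolded posL_def]] l
    unfolding posL_def by simp
  have "w = take (posL w) w @ w ! posL w # drop (Suc (posL w)) w" using lt by (rule id_take_nth_drop)
  also have "w ! posL w = (Suc n, snd (w ! posL w))" using f by (metis prod.collapse)
  finally show "w = take (posL w) w @ (Suc n, snd (w ! posL w)) # drop (Suc (posL w)) w" .
qed

lemma decL_cp:
  assumes "w \<in> colored_perms r (Suc n)"
  shows "fst (decL w) \<in> colored_perms r n" "snd (snd (decL w)) < r"
proof -
  show "fst (decL w) \<in> colored_perms r n" unfolding decL_def fst_conv
    using decL_props(3)[OF assms] assms by (metis cp_split)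
  have "posL w < length w" using decL_props(1)[OF assms] cp_D[OF assms] by simp
  then show "snd (snd (decL w)) < r" unfolding decL_def using cp_D[OF assms] by (auto simp: nth_mem)
qed

lemma insL_decL:
  assumes "w \<in> colored_perms r (Suc n)"
  shows "insL (fst (decL w)) (fst (snd (decL w))) (snd (snd (decL w))) = w"
proof -
  have l: "length w = Suc n" using cp_D[OF assms] by simp
  have u: "length (fst (decL w)) = n" using cp_D[OF decL_cp(1)[OF assms]] by simp
  have p: "posL w \<le> n" by (rule decL_props(1)[OF assms])
  have "insL (fst (decL w)) (fst (snd (decL w))) (snd (snd (decL w)))
      = take (posL w) w @ (Suc n, snd (w ! posL w)) # drop (Suc (posL w)) w"
    unfolding insL_def u unfolding decL_def using p l by simp
  also have "\<dots> = w" using decL_props(3)[OF assms] by simp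
  finally show ?thesis .
qed

lemma bij_insL:
  assumes "0 < r"
  shows "bij_betw (\<lambda>(u,c,e). insL u c e) (colored_perms r n \<times> ({..n} \<times> {..<r})) (colored_perms r (Suc n))"
proof (rule bij_betw_byWitness[where f' = decL])
  show "\<forall>a\<in>colored_perms r n \<times> ({..n} \<times> {..<r}). decL ((\<lambda>(u,c,e). insL u c e) a) = a"
    using decL_insL by auto
  show "\<forall>a'\<in>colored_perms r (Suc n). (\<lambda>(u,c,e). insL u c e) (decL a') = a'"
    using insL_decL by (auto simp: case_prod_beta)
  show "(\<lambda>(u,c,e). insL u c e) ` (colored_perms r n \<times> ({..n} \<times> {..<r})) \<subseteq> colored_perms r (Suc n)"
    using insL_cp by auto
  show "decL ` colored_perms r (Suc n) \<subseteq> colored_perms r n \<times> ({..n} \<times> {..<r})"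
  proof
    fix t assume "t \<in> decL ` colored_perms r (Suc n)"
    then obtain w where w: "w \<in> colored_perms r (Suc n)" "t = decL w" by blast
    then show "t \<in> colored_perms r n \<times> ({..n} \<times> {..<r})"
      using decL_cp[OF w(1)] decL_props(1)[OF w(1)] by (cases t) (auto simp: decL_def)
  qed
qed

lemma P_big: "fst a \<le> n \<Longrightarrow> P (Suc n, e) a = (if e = 0 then 1 else 0)"
  "fst a \<le> n \<Longrightarrow> P a (Suc n, e) = (if e \<noteq> 0 then 1 else 0)"
  by (auto simp: P_def)

lemma Lp_insL:
  assumes "u \<in> colored_perms r n" "c \<le> n"
  shows "Lp (insL u c e) = cst n c e + Lp u"
proof -
  have l: "length u = n" using cp_D[OF assms(1)] by simp
  have fu: "fst x \<le> n" if "x \<in> set u" for x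
  proof -
    have "fst x \<in> set (map fst u)" using that by simp
    then show ?thesis using cp_D[OF assms(1)] by simp
  qed
  have a: "sum_list (map (\<lambda>a. P a (Suc n, e)) (take c u)) = c * (if e \<noteq> 0 then 1 else 0)"
  proof -
    have "\<forall>a\<in>set (take c u). P a (Suc n, e) = (if e \<noteq> 0 then 1 else 0)"
      using fu P_big by (auto dest!: in_set_takeD)
    then show ?thesis using sum_list_const[of "take c u"] l assms(2) by simp
  qed
  have b: "sum_list (map (P (Suc n, e)) (drop c u)) = (n - c) * (if e = 0 then 1 else 0)"
  proof -
    have "\<forall>a\<in>set (drop c u). P (Suc n, e) a = (if e = 0 then 1 else 0)"
      using fu P_big by (auto dest!: in_set_dropD)
    then show ?thesis using sum_list_const[of "drop c u"] l assms(2) by simp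
  qed
  have "Lp (insL u c e) = Lp (take c u @ drop c u) + sum_list (map (\<lambda>a. P a (Suc n, e)) (take c u))
        + sum_list (map (P (Suc n, e)) (drop c u)) + S (Suc n, e)"
    unfolding insL_def l by (rule Lp_del)
  then show ?thesis using a b assms(2) by (simp add: cst_def S_def)
qed

lemma gf_L:
  fixes q :: "'a::comm_ring_1"
  assumes "0 < r"
  shows "(\<Sum>w\<in>colored_perms r (Suc n). q ^ Lp w)
       = (\<Sum>u\<in>colored_perms r n. q ^ Lp u) * (qint q (Suc n) * (1 + q ^ Suc n * qint q (r - 1)))"
proof -
  have "(\<Sum>w\<in>colored_perms r (Suc n). q ^ Lp w) = (\<Sum>u\<in>colored_perms r n. q ^ Lp u) * (\<Sum>c\<le>n. \<Sum>e<r. q ^ cst n c e)"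
    by (rule gf_generic[OF bij_insL[OF assms] finite_cp]) (rule Lp_insL; simp)
  then show ?thesis by (simp only: cst_sum[OF assms])
qed




definition insS :: "nat \<Rightarrow> (nat \<times> nat) list \<Rightarrow> nat \<Rightarrow> nat \<Rightarrow> (nat \<times> nat) list" where
  "insS r u c e = (if c = length u then u @ [(Suc (length u), (r - e) mod r)]
     else u[c := (Suc (length u), (r - e) mod r)] @ [(fst (u!c), (snd (u!c) + e) mod r)])"

lemma mod_back: "(y::nat) < r \<Longrightarrow> e < r \<Longrightarrow> ((y + e) mod r + r - e) mod r = y"
  by (cases "y + e < r") (auto simp: mod_if)

lemma sor_pos_eq:
  assumes "distinct (map fst w)" "k < length w" "fst (w!k) = length w"
  shows "sor_pos w = Suc k"
  unfolding sor_pos_def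
proof (rule arg_cong[where f = Suc], rule Least_equality)
  show "k < length w \<and> fst (w!k) = length w" using assms by simp
  fix i assume "i < length w \<and> fst (w!i) = length w"
  then show "k \<le> i" using fst_ne[OF assms(1), of i k] assms by (cases "i = k") auto
qed

lemma sor_rec:
  assumes "length w = Suc m"
  shows "sor r w = sor_cost r w + sor r (sor_step r w)"
proof -
  have l: "length (sor_step r w) = m" using assms by (simp add: sor_step_def Let_def)
  have "sor r w = (\<Sum>k<Suc m. sor_cost r ((sor_step r ^^ k) w))" by (simp add: sor_def assms)
  also have "\<dots> = sor_cost r w + (\<Sum>k<m. sor_cost r ((sor_step r ^^ Suc k) w))"
    by (subst sum.lessThan_Suc_shift) simp
  also have "(\<Sum>k<m. sor_cost r ((sor_step r ^^ Suc k) w)) = sor r (sor_step r w)"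
    by (simp add: sor_def l funpow_Suc_right del: funpow.simps)
  finally show ?thesis .
qed

context
  fixes r n u c e
  assumes u: "u \<in> colored_perms r n" and c: "c \<le> n" and e: "e < r"
begin

lemma lu: "length u = n" using cp_D[OF u] by simp

lemma len_insS: "length (insS r u c e) = Suc n"
  using lu c by (simp add: insS_def)

lemma insS_c: "insS r u c e ! c = (Suc n, (r - e) mod r)"
  using lu c by (auto simp: insS_def nth_append)

lemma insS_cp: "insS r u c e \<in> colored_perms r (Suc n)"
proof (cases "c = n")
  case True
  have "u @ [] \<in> colored_perms r n" using u by simp
  from cp_join[OF this, of "(r - e) mod r"] e show ?thesis using True lu by (simp add: insS_def)
next
  case False
  then have cn: "c < n" using c by simp
  have r: "0 < r" using e by simp
  have m: "mset (map fst u) = mset [1..<Suc n]" and col: "\<forall>x\<in>set u. snd x < r"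
    using u unfolding cp_mset by auto
  have "mset (map fst (insS r u c e)) = mset (map fst (u[c := (Suc n, (r - e) mod r)])) + {#fst (u!c)#}"
    using False lu by (simp add: insS_def)
  also have "map fst (u[c := (Suc n, (r - e) mod r)]) = (map fst u)[c := Suc n]" by (simp add: map_update)
  also have "mset \<dots> = add_mset (Suc n) (mset (map fst u) - {#fst (u!c)#})"
    using cn lu by (simp add: mset_update)
  also have "\<dots> + {#fst (u!c)#} = add_mset (Suc n) (mset (map fst u))"
    using cn lu by (simp add: insert_DiffM2 nth_mem)
  finally have mm: "mset (map fst (insS r u c e)) = mset [1..<Suc (Suc n)]"
    unfolding mset_upt_Suc m .
  have "\<forall>x\<in>set (insS r u c e). snd x < r"
    using False lu col r by (auto simp: insS_def dest!: set_update_subset_insert[THEN subsetD])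
  then show ?thesis unfolding cp_mset using mm len_insS by blast
qed

lemma pos_insS: "sor_pos (insS r u c e) = Suc c"
proof (rule sor_pos_eq)
  show "distinct (map fst (insS r u c e))" using cp_D[OF insS_cp] by blast
  show "c < length (insS r u c e)" using len_insS c by simp
  show "fst (insS r u c e ! c) = length (insS r u c e)" using len_insS insS_c by simp
qed

lemma e_insS: "sor_e r (insS r u c e) = e"
proof -
  have "sor_e r (insS r u c e) = (r - (r - e) mod r mod r) mod r"
    unfolding sor_e_def pos_insS using insS_c by simp
  also have "\<dots> = e"
  proof (cases "e = 0")
    case True then show ?thesis by simp
  next
    case False then have "(r - e) mod r = r - e" using e by simp
    then show ?thesis using e False by simp
  qed
  finally show ?thesis .
qed

lemma step_insS: "sor_step r (insS r u c e) = u"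
proof (cases "c = n")
  case True
  then show ?thesis unfolding sor_step_def Let_def pos_insS len_insS using lu by (simp add: insS_def)
next
  case False
  then have cn: "c < n" using c by simp
  have col: "snd (u!c) < r" using cp_D[OF u] cn lu by (auto simp: nth_mem)
  have wn: "insS r u c e ! n = (fst (u!c), (snd (u!c) + e) mod r)" using False lu by (simp add: insS_def nth_append)
  have tk: "take n (insS r u c e) = u[c := (Suc n, (r - e) mod r)]" using False lu by (simp add: insS_def)
  have "sor_step r (insS r u c e) = take n ((insS r u c e)[c := (fst (u!c), snd (u!c))])"
    unfolding sor_step_def Let_def pos_insS len_insS e_insS
    using cn by (simp add: wn mod_back[OF col e])
  also have "\<dots> = u" using cn lu by (simp add: take_update_swap tk)
  finally show ?thesis .
qed

lemma cost_insS: "sor_cost r (insS r u c e) = cst n c e"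
  unfolding sor_cost_def Let_def pos_insS len_insS e_insS cst_def using c by auto

lemma sor_insS: "sor r (insS r u c e) = cst n c e + sor r u"
  using sor_rec[OF len_insS] step_insS cost_insS by simp

end

lemma bij_insS:
  assumes "0 < r"
  shows "bij_betw (\<lambda>(u,c,e). insS r u c e) (colored_perms r n \<times> ({..n} \<times> {..<r})) (colored_perms r (Suc n))"
proof -
  let ?T = "colored_perms r n \<times> ({..n} \<times> {..<r})"
  let ?f = "\<lambda>(u,c,e). insS r u c e"
  have inj: "inj_on ?f ?T"
  proof (rule inj_on_inverseI[where g = "\<lambda>w. (sor_step r w, sor_pos w - 1, sor_e r w)"])
    fix t assume t: "t \<in> ?T"
    obtain u c e where tt: "t = (u, c, e)" by (cases t)
    have h: "u \<in> colored_perms r n" "c \<le> n" "e < r" using t tt by auto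
    show "(sor_step r (?f t), sor_pos (?f t) - 1, sor_e r (?f t)) = t"
      unfolding tt using step_insS[OF h] pos_insS[OF h] e_insS[OF h] by simp
  qed
  have sub: "?f ` ?T \<subseteq> colored_perms r (Suc n)"
  proof
    fix w assume "w \<in> ?f ` ?T"
    then obtain u c e where h: "u \<in> colored_perms r n" "c \<le> n" "e < r" and w: "w = insS r u c e" by auto
    show "w \<in> colored_perms r (Suc n)" unfolding w by (rule insS_cp[OF h])
  qed
  have "card (?f ` ?T) = card ?T" using card_image[OF inj] .
  also have "\<dots> = card (colored_perms r (Suc n))" using bij_betw_same_card[OF bij_insL[OF assms]] .
  finally have "?f ` ?T = colored_perms r (Suc n)" using card_subset_eq[OF finite_cp sub] by simp
  then show ?thesis using inj unfolding bij_betw_def by simp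
qed

lemma gf_sor:
  fixes q :: "'a::comm_ring_1"
  assumes "0 < r"
  shows "(\<Sum>w\<in>colored_perms r (Suc n). q ^ sor r w)
       = (\<Sum>u\<in>colored_perms r n. q ^ sor r u) * (qint q (Suc n) * (1 + q ^ Suc n * qint q (r - 1)))"
proof -
  have "(\<Sum>w\<in>colored_perms r (Suc n). q ^ sor r w) = (\<Sum>u\<in>colored_perms r n. q ^ sor r u) * (\<Sum>c\<le>n. \<Sum>e<r. q ^ cst n c e)"
    by (rule gf_generic[OF bij_insS[OF assms] finite_cp], rule sor_insS) simp_all
  then show ?thesis by (simp only: cst_sum[OF assms])
qed




lemma prod_Suc_ivl: "(\<Prod>i=1..Suc n. f i) = (\<Prod>i=1..n. f i) * (f (Suc n) :: 'a::comm_monoid_mult)"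
  by (simp add: prod.cl_ivl_Suc mult.commute)

lemma main_gf:
  fixes q :: "'a::comm_ring_1"
  assumes "0 < r"
  shows "(\<Sum>w\<in>colored_perms r n. q ^ Lp w) = qfact q n * (\<Prod>i=1..n. 1 + q ^ i * qint q (r - 1))
       \<and> (\<Sum>w\<in>colored_perms r n. q ^ sor r w) = qfact q n * (\<Prod>i=1..n. 1 + q ^ i * qint q (r - 1))"
proof (induction n)
  case 0
  then show ?case by (simp add: cp0 qfact_def sor_def)
next
  case (Suc n)
  have qf: "qfact q (Suc n) = qfact q n * qint q (Suc n)" unfolding qfact_def by (rule prod_Suc_ivl)
  have pr: "(\<Prod>i=1..Suc n. 1 + q ^ i * qint q (r - 1)) = (\<Prod>i=1..n. 1 + q ^ i * qint q (r - 1)) * (1 + q ^ Suc n * qint q (r - 1))"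
    by (rule prod_Suc_ivl)
  show ?case using Suc gf_L[OF assms, of q n] gf_sor[OF assms, of q n] unfolding qf pr
    by (simp add: mult_ac)
qed

theorem theorem2p3:
  fixes q :: "'a::comm_ring_1" and r n :: nat
  assumes "0 < r" and "0 < n"
  shows "(\<Sum>w\<in>colored_perms r n. q ^ clength r n w) = (\<Sum>w\<in>colored_perms r n. q ^ sor r w)
       \<and> (\<Sum>w\<in>colored_perms r n. q ^ sor r w)
           = qfact q n * (\<Prod>i=1..n. 1 + q ^ i * qint q (r - 1))"
proof -
  have "(\<Sum>w\<in>colored_perms r n. q ^ clength r n w) = (\<Sum>w\<in>colored_perms r n. q ^ Lp w)"
    using clength_Lp[OF _ assms(2,1)] by (intro sum.cong) auto
  then show ?thesis using main_gf[OF assms(1), of q n] by simp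
qed


end
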